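(* If $\mathcal C\subseteq 2^{[n]}$ is inductively pierced, then $\mathcal C$ is degree two, i.e. every element of $\mathrm{CF}(J_\mathcal C)$ has degree two.
   Context: A code is a set $\mathcal C\subseteq 2^{[n]}$, $[n]=\{1,\dots,n\}$, elements of $[n]$ being neurons. Standing conventions: $\emptyset\in\mathcal C$; every neuron lies in some codeword; no two distinct neurons lie in exactly the same codewords. For $i\in[n]$, $\mathcal C\setminus i$ is obtained by removing $i$ from every codeword. For $\sigma\subseteq\tau$, $[\sigma,\tau]=\{\gamma:\sigma\subseteq\gamma\subseteq\tau\}$, of rank $|\tau\setminus\sigma|$. A neuron $i$ is a $k$-piercing of $\mathcal C$ if there are $\sigma\subseteq\tau\subseteq[n]\setminus\{i\}$ with $[\sigma,\tau]$ of rank $k$, $[\sigma,\tau]\subseteq\mathcal C\setminus i$, and $\mathcal C=(\mathcal C\setminus i)\cup[\sigma\cup\{i\},\tau\cup\{i\}]$. A code is $k$-inductively pierced if $\mathcal C=\{\emptyset\}$, or some neuron $i$ is a $k'$-piercing for some $k'\le k$ and $\mathcal C\setminus i$ is $k$-inductively pierced; inductively pierced means $k$-inductively pierced for some $k$. A pseudo-monomial in $\mathbb F_2[x_1,\dots,x_n]$ is $\prod_{i\in\sigma}x_i\prod_{j\in\tau}(1-x_j)$ with $\sigma\cap\tau=\emptyset$, ordered by divisibility. $J_\mathcal C=\langle\rho_\sigma:\sigma\notin\mathcal C\rangle$ with $\rho_\sigma=\prod_{i\in\sigma}x_i\prod_{j\notin\sigma}(1-x_j)$, and $\mathrm{CF}(J_\mathcal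 C)$ is the set of minimal pseudo-monomials in $J_\mathcal C$. *)

theory Defs
  imports "HOL-Library.Poly_Mapping" "HOL-Library.Z2"
begin

definition is_code :: "nat \<Rightarrow> nat set set \<Rightarrow> bool" where
  "is_code n C \<longleftrightarrow> (\<forall>c\<in>C. c \<subseteq> {1..n}) \<and> {} \<in> C
     \<and> (\<forall>i\<in>{1..n}. \<exists>c\<in>C. i \<in> c)
     \<and> (\<forall>i\<in>{1..n}. \<forall>j\<in>{1..n}. i \<noteq> j \<longrightarrow> {c\<in>C. i \<in> c} \<noteq> {c\<in>C. j \<in> c})"

definition del_neuron :: "nat set set \<Rightarrow> nat \<Rightarrow> nat set set" where
  "del_neuron C i = (\<lambda>c. c - {i}) ` C"

definition interval :: "nat set \<Rightarrow> nat set \<Rightarrow> nat set set" where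
  "interval \<sigma> \<tau> = {\<gamma>. \<sigma> \<subseteq> \<gamma> \<and> \<gamma> \<subseteq> \<tau>}"

definition piercing :: "nat \<Rightarrow> nat set set \<Rightarrow> nat \<Rightarrow> nat \<Rightarrow> bool" where
  "piercing n C i k \<longleftrightarrow> i \<in> {1..n} \<and>
     (\<exists>\<sigma> \<tau>. \<sigma> \<subseteq> \<tau> \<and> \<tau> \<subseteq> {1..n} - {i} \<and> card (\<tau> - \<sigma>) = k
        \<and> interval \<sigma> \<tau> \<subseteq> del_neuron C i
        \<and> C = del_neuron C i \<union> interval (\<sigma> \<union> {i}) (\<tau> \<union> {i}))"

inductive k_ind_pierced :: "nat \<Rightarrow> nat \<Rightarrow> nat set set \<Rightarrow> bool" for n k where
  base: "k_ind_pierced n k {{}}"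
| step: "piercing n C i k' \<Longrightarrow> k' \<le> k \<Longrightarrow> k_ind_pierced n k (del_neuron C i)
          \<Longrightarrow> k_ind_pierced n k C"

definition ind_pierced :: "nat \<Rightarrow> nat set set \<Rightarrow> bool" where
  "ind_pierced n C \<longleftrightarrow> (\<exists>k. k_ind_pierced n k C)"

type_synonym f2poly = "(nat \<Rightarrow>\<^sub>0 nat) \<Rightarrow>\<^sub>0 bit"

text \<open>Membership in F_2[x_1,...,x_n] (inside the polynomial ring in countably many variables).\<close>
definition poly_in :: "nat \<Rightarrow> f2poly \<Rightarrow> bool" where
  "poly_in n p \<longleftrightarrow> (\<forall>m\<in>Poly_Mapping.keys p. Poly_Mapping.keys m \<subseteq> {1..n})"

definition var :: "nat \<Rightarrow> f2poly" where
  "var i = Poly_Mapping.single (Poly_Mapping.single i 1) 1"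

definition tdeg :: "f2poly \<Rightarrow> nat" where
  "tdeg p = Max ((\<lambda>m. sum (Poly_Mapping.lookup m) (Poly_Mapping.keys m)) ` Poly_Mapping.keys p)"

definition ideal_gen :: "nat \<Rightarrow> f2poly set \<Rightarrow> f2poly set" where
  "ideal_gen n G = {(\<Sum>g\<in>F. r g * g) | F r. finite F \<and> F \<subseteq> G \<and> (\<forall>g\<in>F. poly_in n (r g))}"

definition pdvd :: "nat \<Rightarrow> f2poly \<Rightarrow> f2poly \<Rightarrow> bool" where
  "pdvd n g f \<longleftrightarrow> (\<exists>q. poly_in n q \<and> f = g * q)"

definition pm :: "nat set \<Rightarrow> nat set \<Rightarrow> f2poly" where
  "pm \<sigma> \<tau> = (\<Prod>i\<in>\<sigma>. var i) * (\<Prod>j\<in>\<tau>. 1 - var j)"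

definition is_pseudo_monomial :: "nat \<Rightarrow> f2poly \<Rightarrow> bool" where
  "is_pseudo_monomial n f \<longleftrightarrow> (\<exists>\<sigma> \<tau>. \<sigma> \<subseteq> {1..n} \<and> \<tau> \<subseteq> {1..n} \<and> \<sigma> \<inter> \<tau> = {} \<and> f = pm \<sigma> \<tau>)"

definition rho :: "nat \<Rightarrow> nat set \<Rightarrow> f2poly" where
  "rho n \<sigma> = pm \<sigma> ({1..n} - \<sigma>)"

definition neural_ideal :: "nat \<Rightarrow> nat set set \<Rightarrow> f2poly set" where
  "neural_ideal n C = ideal_gen n {rho n \<sigma> | \<sigma>. \<sigma> \<subseteq> {1..n} \<and> \<sigma> \<notin> C}"

definition canonical_form :: "nat \<Rightarrow> nat set set \<Rightarrow> f2poly set" where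
  "canonical_form n C = {f. is_pseudo_monomial n f \<and> f \<in> neural_ideal n C
     \<and> (\<forall>g. is_pseudo_monomial n g \<and> g \<in> neural_ideal n C \<and> pdvd n g f \<longrightarrow> g = f)}"

end

theory Submission
  imports Defs
begin

definition ev :: "nat set \<Rightarrow> f2poly \<Rightarrow> bit" where
  "ev c p = (\<Sum>m\<in>Poly_Mapping.keys p. if Poly_Mapping.keys m \<subseteq> c then Poly_Mapping.lookup p m else 0)"

lemma ev_add: "ev c (p + q) = ev c p + ev c q"
  unfolding ev_def by (rule setsum_keys_plus_distrib) auto

lemma ev_zero[simp]: "ev c 0 = 0" by (simp add: ev_def)

lemma ev_sum: "ev c (\<Sum>i\<in>I. f i) = (\<Sum>i\<in>I. ev c (f i))"
  by (induction I rule: infinite_finite_induct) (auto simp: ev_add)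

lemma ev_single[simp]: "ev c (Poly_Mapping.single m v) = (if Poly_Mapping.keys m \<subseteq> c then v else 0)"
  by (simp add: ev_def)

lemma pm_expand: "(p::('a \<Rightarrow>\<^sub>0 'b::comm_monoid_add)) = (\<Sum>m\<in>Poly_Mapping.keys p. Poly_Mapping.single m (Poly_Mapping.lookup p m))"
proof (rule poly_mapping_eqI)
  fix k
  show "Poly_Mapping.lookup p k = Poly_Mapping.lookup (\<Sum>m\<in>Poly_Mapping.keys p. Poly_Mapping.single m (Poly_Mapping.lookup p m)) k"
    by (simp add: lookup_sum lookup_single when_def in_keys_iff)
qed

lemma keys_add_nat: "Poly_Mapping.keys ((a::nat \<Rightarrow>\<^sub>0 nat) + b) = Poly_Mapping.keys a \<union> Poly_Mapping.keys b"
  by (auto simp: in_keys_iff lookup_add)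

lemma ev_mult: "ev c (p * q) = ev c p * ev c q"
proof -
  have "p * q = (\<Sum>a\<in>Poly_Mapping.keys p. \<Sum>b\<in>Poly_Mapping.keys q.
      Poly_Mapping.single a (Poly_Mapping.lookup p a) * Poly_Mapping.single b (Poly_Mapping.lookup q b))"
    by (subst pm_expand[of p], subst pm_expand[of q]) (simp add: sum_distrib_left sum_distrib_right, rule sum.swap)
  hence "ev c (p * q) = (\<Sum>a\<in>Poly_Mapping.keys p. \<Sum>b\<in>Poly_Mapping.keys q.
      ev c (Poly_Mapping.single a (Poly_Mapping.lookup p a) * Poly_Mapping.single b (Poly_Mapping.lookup q b)))"
    by (simp only: ev_sum)
  also have "\<dots> = (\<Sum>a\<in>Poly_Mapping.keys p. \<Sum>b\<in>Poly_Mapping.keys q.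
      ev c (Poly_Mapping.single a (Poly_Mapping.lookup p a)) * ev c (Poly_Mapping.single b (Poly_Mapping.lookup q b)))"
    by (rule sum.cong[OF refl], rule sum.cong[OF refl]) (simp only: mult_single ev_single keys_add_nat, auto)
  also have "\<dots> = ev c p * ev c q"
    by (subst (3) pm_expand[of p], subst (3) pm_expand[of q]) (simp only: ev_sum sum_distrib_left sum_distrib_right, rule sum.swap)
  finally show ?thesis .
qed

lemma ev_one[simp]: "ev c 1 = 1"
  by (simp add: ev_def)

lemma ev_var[simp]: "ev c (var i) = (if i \<in> c then 1 else 0)"
  by (simp add: var_def)

lemma ev_one_minus_var[simp]: "ev c (1 - var i) = (if i \<in> c then 0 else 1)"
proof -
  have "ev c ((1 - var i) + var i) = 1" by simp
  hence "ev c (1 - var i) + ev c (var i) = 1" by (simp only: ev_add)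
  hence "ev c (1 - var i) = 1 - ev c (var i)" by (simp only: eq_diff_eq)
  thus ?thesis by simp
qed

lemma ev_prod: "ev c (\<Prod>i\<in>I. f i) = (\<Prod>i\<in>I. ev c (f i))"
  by (induction I rule: infinite_finite_induct) (auto simp: ev_mult)

lemma ev_pm: "finite \<sigma> \<Longrightarrow> finite \<tau> \<Longrightarrow> ev c (pm \<sigma> \<tau>) = (if \<sigma> \<subseteq> c \<and> \<tau> \<inter> c = {} then 1 else 0)"
  unfolding pm_def ev_mult ev_prod
  by (auto simp: prod_zero_iff)


definition ind :: "nat set \<Rightarrow> (nat \<Rightarrow>\<^sub>0 nat)" where
  "ind S = (\<Sum>i\<in>S. Poly_Mapping.single i 1)"

lemma lookup_ind: "finite S \<Longrightarrow> Poly_Mapping.lookup (ind S) k = (if k \<in> S then 1 else 0)"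
  by (simp add: ind_def lookup_sum lookup_single when_def)

lemma keys_ind[simp]: "finite S \<Longrightarrow> Poly_Mapping.keys (ind S) = S"
  by (auto simp: in_keys_iff lookup_ind split: if_splits)

lemma ind_insert: "finite S \<Longrightarrow> i \<notin> S \<Longrightarrow> ind (insert i S) = Poly_Mapping.single i 1 + ind S"
  by (simp add: ind_def)

lemma prod_var: "finite \<sigma> \<Longrightarrow> (\<Prod>i\<in>\<sigma>. var i) = Poly_Mapping.single (ind \<sigma>) 1"
proof (induction \<sigma> rule: finite_induct)
  case empty
  then show ?case by (simp add: ind_def)
next
  case (insert x F)
  then show ?case by (simp add: var_def mult_single ind_insert)
qed

lemma neg_self: "- (p::f2poly) = p"
  by (rule poly_mapping_eqI) simp

lemma pm_insert_left: "finite \<sigma> \<Longrightarrow> u \<notin> \<sigma> \<Longrightarrow> pm (insert u \<sigma>) \<tau> = var u * pm \<sigma> \<tau>"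
  by (simp add: pm_def mult.assoc)

lemma pm_insert_right: "finite \<tau> \<Longrightarrow> u \<notin> \<tau> \<Longrightarrow> pm \<sigma> (insert u \<tau>) = (1 - var u) * pm \<sigma> \<tau>"
  by (simp add: pm_def ac_simps)

lemma pm_expansion:
  assumes "finite \<tau>" "finite \<sigma>" "\<sigma> \<inter> \<tau> = {}"
  shows "pm \<sigma> \<tau> = (\<Sum>A\<in>Pow \<tau>. Poly_Mapping.single (ind (\<sigma> \<union> A)) 1)"
  using assms
proof (induction \<tau> rule: finite_induct)
  case empty
  then show ?case by (simp add: pm_def prod_var)
next
  case (insert j \<tau>)
  have jn: "j \<notin> \<sigma>" using insert by auto
  have IH: "pm \<sigma> \<tau> = (\<Sum>A\<in>Pow \<tau>. Poly_Mapping.single (ind (\<sigma> \<union> A)) 1)"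
    using insert by auto
  have "pm \<sigma> (insert j \<tau>) = pm \<sigma> \<tau> - var j * pm \<sigma> \<tau>"
    using insert by (simp add: pm_insert_right algebra_simps)
  also have "\<dots> = pm \<sigma> \<tau> + var j * pm \<sigma> \<tau>"
    by (metis diff_conv_add_uminus neg_self)
  also have "var j * pm \<sigma> \<tau> = (\<Sum>A\<in>Pow \<tau>. Poly_Mapping.single (ind (\<sigma> \<union> insert j A)) 1)"
    unfolding IH sum_distrib_left
  proof (rule sum.cong)
    fix A assume "A \<in> Pow \<tau>"
    hence "finite (\<sigma> \<union> A)" "j \<notin> \<sigma> \<union> A" using insert jn finite_subset by auto
    thus "var j * Poly_Mapping.single (ind (\<sigma> \<union> A)) 1 = Poly_Mapping.single (ind (\<sigma> \<union> insert j A)) 1"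
      by (simp add: var_def mult_single ind_insert)
  qed simp
  also have "\<dots> = (\<Sum>A\<in>insert j ` Pow \<tau>. Poly_Mapping.single (ind (\<sigma> \<union> A)) 1)"
  proof -
    have "inj_on (insert j) (Pow \<tau>)"
    proof (rule inj_onI)
      fix A B assume "A \<in> Pow \<tau>" "B \<in> Pow \<tau>" "insert j A = insert j B"
      moreover have "j \<notin> A" "j \<notin> B" using calculation insert.hyps(2) by auto
      ultimately show "A = B" using insert_ident by metis
    qed
    thus ?thesis by (simp add: sum.reindex)
  qed
  also have "pm \<sigma> \<tau> + \<dots> = (\<Sum>A\<in>Pow (insert j \<tau>). Poly_Mapping.single (ind (\<sigma> \<union> A)) 1)"
    unfolding Pow_insert IH
    by (rule sum.union_disjoint[symmetric]) (use insert in auto)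
  finally show ?case .
qed

lemma keys_pm:
  assumes "finite \<tau>" "finite \<sigma>" "\<sigma> \<inter> \<tau> = {}"
  shows "Poly_Mapping.keys (pm \<sigma> \<tau>) = (\<lambda>A. ind (\<sigma> \<union> A)) ` Pow \<tau>"
proof -
  let ?f = "\<lambda>A. ind (\<sigma> \<union> A)"
  have inj: "inj_on ?f (Pow \<tau>)"
  proof (rule inj_onI)
    fix A B assume "A \<in> Pow \<tau>" "B \<in> Pow \<tau>" "?f A = ?f B"
    moreover have "finite A" "finite B" using calculation assms finite_subset by auto
    ultimately have "\<sigma> \<union> A = \<sigma> \<union> B"
      by (metis assms(2) finite_UnI keys_ind)
    thus "A = B" using assms \<open>A \<in> Pow \<tau>\<close> \<open>B \<in> Pow \<tau>\<close> by blast
  qed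
  have lk: "Poly_Mapping.lookup (pm \<sigma> \<tau>) m = (\<Sum>A\<in>Pow \<tau>. if ?f A = m then 1 else 0)" for m
    by (simp add: pm_expansion[OF assms] lookup_sum lookup_single when_def)
  show ?thesis
  proof (intro set_eqI iffI)
    fix m assume "m \<in> Poly_Mapping.keys (pm \<sigma> \<tau>)"
    hence nz: "(\<Sum>A\<in>Pow \<tau>. if ?f A = m then 1 else 0) \<noteq> (0::bit)" by (simp add: lk in_keys_iff)
    have "\<exists>A\<in>Pow \<tau>. ?f A = m"
    proof (rule ccontr)
      assume "\<not> (\<exists>A\<in>Pow \<tau>. ?f A = m)"
      hence "(\<Sum>A\<in>Pow \<tau>. if ?f A = m then 1 else 0) = (0::bit)" by (intro sum.neutral) auto
      thus False using nz by simp
    qed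
    thus "m \<in> ?f ` Pow \<tau>" by blast
  next
    fix m assume "m \<in> ?f ` Pow \<tau>"
    then obtain A0 where A0: "A0 \<in> Pow \<tau>" "m = ?f A0" by blast
    have "(\<Sum>A\<in>Pow \<tau>. if ?f A = m then 1 else 0) = (\<Sum>A\<in>Pow \<tau>. if A = A0 then 1 else (0::bit))"
      by (rule sum.cong) (use A0 inj in \<open>auto simp: inj_on_def\<close>)
    also have "\<dots> = 1" using A0 assms by simp
    finally show "m \<in> Poly_Mapping.keys (pm \<sigma> \<tau>)" by (simp add: lk in_keys_iff)
  qed
qed

lemma deg_ind: "finite S \<Longrightarrow> sum (Poly_Mapping.lookup (ind S)) (Poly_Mapping.keys (ind S)) = card S"
  by (simp add: lookup_ind)

lemma tdeg_pm:
  assumes "finite \<tau>" "finite \<sigma>" "\<sigma> \<inter> \<tau> = {}"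
  shows "tdeg (pm \<sigma> \<tau>) = card \<sigma> + card \<tau>"
proof -
  have "(\<lambda>m. sum (Poly_Mapping.lookup m) (Poly_Mapping.keys m)) ` Poly_Mapping.keys (pm \<sigma> \<tau>)
      = (\<lambda>A. card \<sigma> + card A) ` Pow \<tau>"
  proof -
    have "(\<lambda>m. sum (Poly_Mapping.lookup m) (Poly_Mapping.keys m)) ` Poly_Mapping.keys (pm \<sigma> \<tau>)
      = (\<lambda>A. card (\<sigma> \<union> A)) ` Pow \<tau>"
      unfolding keys_pm[OF assms] image_image
    proof (rule image_cong[OF refl])
      fix A assume "A \<in> Pow \<tau>"
      hence "finite (\<sigma> \<union> A)" using assms finite_subset by auto
      thus "sum (Poly_Mapping.lookup (ind (\<sigma> \<union> A))) (Poly_Mapping.keys (ind (\<sigma> \<union> A))) = card (\<sigma> \<union> A)"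
        by (rule deg_ind)
    qed
    also have "\<dots> = (\<lambda>A. card \<sigma> + card A) ` Pow \<tau>"
      by (rule image_cong) (use assms finite_subset in \<open>auto intro!: card_Un_disjoint\<close>)
    finally show ?thesis .
  qed
  moreover have "Max ((\<lambda>A. card \<sigma> + card A) ` Pow \<tau>) = card \<sigma> + card \<tau>"
    by (rule Max_eqI) (use assms in \<open>auto intro: card_mono\<close>)
  ultimately show ?thesis by (simp add: tdeg_def)
qed

lemma poly_in_pm:
  assumes "\<sigma> \<subseteq> {1..n}" "\<tau> \<subseteq> {1..n}" "\<sigma> \<inter> \<tau> = {}"
  shows "poly_in n (pm \<sigma> \<tau>)"
proof -
  have f: "finite \<sigma>" "finite \<tau>" using assms by (meson finite_atLeastAtMost finite_subset)+
  show ?thesis unfolding poly_in_def keys_pm[OF f(2) f(1) assms(3)]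
  proof
    fix m assume "m \<in> (\<lambda>A. ind (\<sigma> \<union> A)) ` Pow \<tau>"
    then obtain A where A: "A \<subseteq> \<tau>" "m = ind (\<sigma> \<union> A)" by blast
    hence "finite (\<sigma> \<union> A)" using f finite_subset by blast
    thus "Poly_Mapping.keys m \<subseteq> {1..n}" using A assms by simp
  qed
qed


lemma pm_partition:
  assumes "finite U"
  shows "finite \<sigma> \<Longrightarrow> finite \<tau> \<Longrightarrow> U \<inter> \<sigma> = {} \<Longrightarrow> U \<inter> \<tau> = {} \<Longrightarrow>
    (\<Sum>A\<in>Pow U. pm (\<sigma> \<union> A) (\<tau> \<union> (U - A))) = pm \<sigma> \<tau>"
  using assms
proof (induction U arbitrary: \<sigma> \<tau> rule: finite_induct)
  case empty
  then show ?case by simp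
next
  case (insert u U)
  have inj: "inj_on (insert u) (Pow U)"
  proof (rule inj_onI)
    fix A B assume "A \<in> Pow U" "B \<in> Pow U" "insert u A = insert u B"
    moreover have "u \<notin> A" "u \<notin> B" using calculation insert.hyps(2) by auto
    ultimately show "A = B" using insert_ident by metis
  qed
  have "(\<Sum>A\<in>Pow (insert u U). pm (\<sigma> \<union> A) (\<tau> \<union> (insert u U - A)))
     = (\<Sum>A\<in>Pow U. pm (\<sigma> \<union> A) (\<tau> \<union> (insert u U - A)))
       + (\<Sum>A\<in>insert u ` Pow U. pm (\<sigma> \<union> A) (\<tau> \<union> (insert u U - A)))"
  proof -
    have disj: "Pow U \<inter> insert u ` Pow U = {}" using insert(2) by blast
    show ?thesis unfolding Pow_insert
      by (rule sum.union_disjoint) (simp_all add: insert.hyps(1) disj)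
  qed
  also have "(\<Sum>A\<in>Pow U. pm (\<sigma> \<union> A) (\<tau> \<union> (insert u U - A)))
      = (\<Sum>A\<in>Pow U. pm (\<sigma> \<union> A) (insert u \<tau> \<union> (U - A)))"
    by (rule sum.cong[OF refl]) (use insert in \<open>auto intro!: arg_cong2[where f=pm]\<close>)
  also have "\<dots> = pm \<sigma> (insert u \<tau>)"
    by (rule insert.IH) (use insert in auto)
  also have "(\<Sum>A\<in>insert u ` Pow U. pm (\<sigma> \<union> A) (\<tau> \<union> (insert u U - A)))
     = (\<Sum>A\<in>Pow U. pm (\<sigma> \<union> insert u A) (\<tau> \<union> (insert u U - insert u A)))"
    by (simp add: sum.reindex[OF inj])
  also have "\<dots> = (\<Sum>A\<in>Pow U. pm (insert u \<sigma> \<union> A) (\<tau> \<union> (U - A)))"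
    by (rule sum.cong[OF refl]) (use insert in \<open>auto intro!: arg_cong2[where f=pm]\<close>)
  also have "\<dots> = pm (insert u \<sigma>) \<tau>"
    by (rule insert.IH) (use insert in auto)
  also have "pm \<sigma> (insert u \<tau>) + pm (insert u \<sigma>) \<tau> = pm \<sigma> \<tau>"
    using insert by (simp add: pm_insert_left pm_insert_right algebra_simps)
  finally show ?case .
qed

lemma ev_rho: "c \<subseteq> {1..n} \<Longrightarrow> \<gamma> \<subseteq> {1..n} \<Longrightarrow> ev c (rho n \<gamma>) = (if \<gamma> = c then 1 else 0)"
  unfolding rho_def
  by (subst ev_pm) (auto intro: finite_subset)

lemma in_ideal:
  assumes "\<forall>c\<in>C. \<not> (\<sigma> \<subseteq> c \<and> c \<inter> \<tau> = {})"
    and "\<sigma> \<subseteq> {1..n}" "\<tau> \<subseteq> {1..n}" "\<sigma> \<inter> \<tau> = {}"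
  shows "pm \<sigma> \<tau> \<in> neural_ideal n C"
proof -
  have fs: "finite \<sigma>" "finite \<tau>" using assms by (meson finite_atLeastAtMost finite_subset)+
  define U where "U = {1..n} - \<sigma> - \<tau>"
  define B where "B = (\<lambda>A. \<sigma> \<union> A) ` Pow U"
  have injU: "inj_on (\<lambda>A. \<sigma> \<union> A) (Pow U)"
    by (rule inj_onI) (auto simp: U_def)
  have Bsub: "\<gamma> \<subseteq> {1..n}" if "\<gamma> \<in> B" for \<gamma> using that assms by (auto simp: B_def U_def)
  have injr: "inj_on (rho n) B"
  proof (rule inj_onI)
    fix x y assume "x \<in> B" "y \<in> B" "rho n x = rho n y"
    hence "ev x (rho n x) = ev x (rho n y)" by simp
    thus "x = y" using Bsub[OF \<open>x \<in> B\<close>] Bsub[OF \<open>y \<in> B\<close>]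
      by (simp add: ev_rho split: if_splits)
  qed
  have "(\<Sum>g\<in>rho n ` B. 1 * g) = (\<Sum>\<gamma>\<in>B. rho n \<gamma>)"
    by (simp add: sum.reindex[OF injr])
  also have "\<dots> = (\<Sum>A\<in>Pow U. rho n (\<sigma> \<union> A))"
    by (simp add: B_def sum.reindex[OF injU])
  also have "\<dots> = (\<Sum>A\<in>Pow U. pm (\<sigma> \<union> A) (\<tau> \<union> (U - A)))"
    by (rule sum.cong[OF refl]) (use assms in \<open>auto simp: rho_def U_def intro!: arg_cong2[where f=pm]\<close>)
  also have "\<dots> = pm \<sigma> \<tau>"
    by (rule pm_partition) (use fs assms in \<open>auto simp: U_def\<close>)
  finally have eq: "(\<Sum>g\<in>rho n ` B. 1 * g) = pm \<sigma> \<tau>" .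
  have "rho n ` B \<subseteq> {rho n \<sigma> | \<sigma>. \<sigma> \<subseteq> {1..n} \<and> \<sigma> \<notin> C}"
  proof
    fix g assume "g \<in> rho n ` B"
    then obtain \<gamma> where g: "\<gamma> \<in> B" "g = rho n \<gamma>" by blast
    obtain x where x: "\<gamma> = \<sigma> \<union> x" "x \<subseteq> U" using g(1) by (auto simp: B_def)
    have "\<sigma> \<subseteq> \<gamma>" "\<gamma> \<inter> \<tau> = {}" using x assms(4) by (auto simp: U_def)
    hence "\<gamma> \<notin> C" using assms(1) by blast
    thus "g \<in> {rho n \<sigma> | \<sigma>. \<sigma> \<subseteq> {1..n} \<and> \<sigma> \<notin> C}" using g Bsub by blast
  qed
  moreover have "finite (rho n ` B)" by (simp add: B_def U_def)
  moreover have "poly_in n (1::f2poly)" by (simp add: poly_in_def)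
  ultimately have "\<exists>F r. pm \<sigma> \<tau> = (\<Sum>g\<in>F. r g * g) \<and> finite F \<and> F \<subseteq> {rho n \<sigma> | \<sigma>. \<sigma> \<subseteq> {1..n} \<and> \<sigma> \<notin> C} \<and> (\<forall>g\<in>F. poly_in n (r g))"
    using eq by (intro exI[of _ "rho n ` B"] exI[of _ "\<lambda>_. 1"]) simp
  thus ?thesis unfolding neural_ideal_def ideal_gen_def by simp
qed

lemma ideal_ev:
  assumes "f \<in> neural_ideal n C" "c \<in> C" "\<forall>c\<in>C. c \<subseteq> {1..n}"
  shows "ev c f = 0"
proof -
  obtain F r where f: "f = (\<Sum>g\<in>F. r g * g)" "F \<subseteq> {rho n \<sigma> | \<sigma>. \<sigma> \<subseteq> {1..n} \<and> \<sigma> \<notin> C}"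
    using assms(1) unfolding neural_ideal_def ideal_gen_def by blast
  have "ev c g = 0" if "g \<in> F" for g
  proof -
    obtain \<gamma> where "g = rho n \<gamma>" "\<gamma> \<subseteq> {1..n}" "\<gamma> \<notin> C" using f(2) \<open>g \<in> F\<close> by blast
    thus ?thesis using assms ev_rho by auto
  qed
  thus ?thesis by (simp add: f ev_sum ev_mult)
qed


definition eb :: "nat set set \<Rightarrow> nat set \<Rightarrow> nat set \<Rightarrow> bool" where
  "eb C \<sigma> \<tau> \<longleftrightarrow> (\<forall>c\<in>C. \<not> (\<sigma> \<subseteq> c \<and> c \<inter> \<tau> = {}))"

lemma eb_del: assumes "i \<notin> \<sigma>" "i \<notin> \<tau>" shows "eb (del_neuron C i) \<sigma> \<tau> \<longleftrightarrow> eb C \<sigma> \<tau>"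
proof -
  have "\<And>c. (\<sigma> \<subseteq> c - {i}) = (\<sigma> \<subseteq> c)" "\<And>c. (c - {i}) \<inter> \<tau> = c \<inter> \<tau>" using assms by auto
  then show ?thesis by (simp add: eb_def del_neuron_def)
qed

lemma comb:
  assumes "k_ind_pierced n k C"
  shows "\<sigma> \<inter> \<tau> = {} \<Longrightarrow> finite \<sigma> \<Longrightarrow> finite \<tau> \<Longrightarrow> eb C \<sigma> \<tau> \<Longrightarrow>
    (\<forall>\<sigma>'\<subseteq>\<sigma>. \<forall>\<tau>'\<subseteq>\<tau>. eb C \<sigma>' \<tau>' \<longrightarrow> \<sigma>' = \<sigma> \<and> \<tau>' = \<tau>) \<Longrightarrow> card \<sigma> + card \<tau> \<le> 2"
  using assms
proof (induction arbitrary: \<sigma> \<tau> rule: k_ind_pierced.induct)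
  case base
  then obtain i where "i \<in> \<sigma>" by (auto simp: eb_def)
  moreover have "eb {{}} {i} {}" by (simp add: eb_def)
  ultimately have "\<sigma> = {i} \<and> \<tau> = {}" using base.prems(5) by blast
  thus ?case by simp
next
  case (step C i k')
  let ?D = "del_neuron C i"
  obtain \<sigma>0 \<tau>0 where p: "\<sigma>0 \<subseteq> \<tau>0" "\<tau>0 \<subseteq> {1..n} - {i}" "interval \<sigma>0 \<tau>0 \<subseteq> ?D"
     "C = ?D \<union> interval (\<sigma>0 \<union> {i}) (\<tau>0 \<union> {i})"
    using step.hyps(1) unfolding piercing_def by blast
  have DC: "?D \<subseteq> C" using p(4) by blast
  have Dni: "i \<notin> d" if "d \<in> ?D" for d using that by (auto simp: del_neuron_def)
  have Ci: "\<sigma>0 \<subseteq> c \<and> c \<subseteq> \<tau>0 \<union> {i}" if "c \<in> C" "i \<in> c" for c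
    using that p(4) Dni by (auto simp: interval_def)
  have minC: "\<And>\<sigma>' \<tau>'. \<sigma>' \<subseteq> \<sigma> \<Longrightarrow> \<tau>' \<subseteq> \<tau> \<Longrightarrow> eb C \<sigma>' \<tau>' \<Longrightarrow> \<sigma>' = \<sigma> \<and> \<tau>' = \<tau>"
    using step.prems(5) by blast
  consider "i \<in> \<sigma>" | "i \<in> \<tau>" | "i \<notin> \<sigma>" "i \<notin> \<tau>" by blast
  then show ?case
  proof cases
    case 1
    hence iT: "i \<notin> \<tau>" using step.prems(1) by blast
    show ?thesis
    proof (cases "\<sigma> - {i} \<subseteq> \<tau>0 \<and> \<sigma>0 \<inter> \<tau> = {}")
      case True
      let ?c = "(\<sigma> - {i}) \<union> \<sigma>0 \<union> {i}"
      have "?c \<in> C" using True p by (auto simp: interval_def)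
      moreover have "\<sigma> \<subseteq> ?c \<and> ?c \<inter> \<tau> = {}" using True iT step.prems(1) by auto
      ultimately show ?thesis using step.prems(4) by (auto simp: eb_def)
    next
      case False
      then consider a where "a \<in> \<sigma>" "a \<noteq> i" "a \<notin> \<tau>0" | b where "b \<in> \<sigma>0" "b \<in> \<tau>" by blast
      then show ?thesis
      proof cases
        case (1 a)
        have "eb C {i, a} {}" unfolding eb_def using Ci 1 by blast
        moreover have "{i, a} \<subseteq> \<sigma>" using \<open>i \<in> \<sigma>\<close> 1 by simp
        ultimately have "{i, a} = \<sigma> \<and> {} = \<tau>" using minC[of "{i, a}" "{}"] by simp
        thus ?thesis using 1 by auto
      next
        case (2 b)
        have "eb C {i} {b}" unfolding eb_def using Ci 2 by blast
        moreover have "{i} \<subseteq> \<sigma>" "{b} \<subseteq> \<tau>" using \<open>i \<in> \<sigma>\<close> 2 by simp_all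
        ultimately have "{i} = \<sigma> \<and> {b} = \<tau>" using minC[of "{i}" "{b}"] by simp
        thus ?thesis by auto
      qed
    qed
  next
    case 2
    hence iS: "i \<notin> \<sigma>" using step.prems(1) by blast
    have "eb C \<sigma> (\<tau> - {i})"
      unfolding eb_def
    proof (intro ballI notI)
      fix c assume c: "c \<in> C" "\<sigma> \<subseteq> c \<and> c \<inter> (\<tau> - {i}) = {}"
      show False
      proof (cases "i \<in> c")
        case False
        thus False using c step.prems(4) by (auto simp: eb_def)
      next
        case True
        have "c \<notin> ?D" using True Dni by blast
        hence "c \<in> interval (\<sigma>0 \<union> {i}) (\<tau>0 \<union> {i})" using p(4) c by blast
        hence "c - {i} \<in> interval \<sigma>0 \<tau>0" using p(1,2) by (auto simp: interval_def)
        hence "c - {i} \<in> C" using p(3) DC by blast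
        moreover have "\<sigma> \<subseteq> c - {i} \<and> (c - {i}) \<inter> \<tau> = {}" using c iS by auto
        ultimately show False using step.prems(4) by (auto simp: eb_def)
      qed
    qed
    hence "\<tau> - {i} = \<tau>" using minC[of \<sigma> "\<tau> - {i}"] by simp
    thus ?thesis using 2 by blast
  next
    case 3
    show ?thesis
    proof (rule step.IH)
      show "eb ?D \<sigma> \<tau>" using eb_del 3 step.prems(4) by blast
      show "\<forall>\<sigma>'\<subseteq>\<sigma>. \<forall>\<tau>'\<subseteq>\<tau>. eb ?D \<sigma>' \<tau>' \<longrightarrow> \<sigma>' = \<sigma> \<and> \<tau>' = \<tau>"
      proof (intro allI impI)
        fix \<sigma>' \<tau>' assume "\<sigma>' \<subseteq> \<sigma>" "\<tau>' \<subseteq> \<tau>" "eb ?D \<sigma>' \<tau>'"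
        moreover have "i \<notin> \<sigma>'" "i \<notin> \<tau>'" using 3 calculation by auto
        ultimately show "\<sigma>' = \<sigma> \<and> \<tau>' = \<tau>" using eb_del[of i \<sigma>' \<tau>' C] minC[of \<sigma>' \<tau>'] by simp
      qed
    qed (use step.prems in auto)
  qed
qed


lemma pm_split:
  assumes "\<sigma>' \<subseteq> \<sigma>" "\<tau>' \<subseteq> \<tau>" "finite \<sigma>" "finite \<tau>"
  shows "pm \<sigma> \<tau> = pm \<sigma>' \<tau>' * pm (\<sigma> - \<sigma>') (\<tau> - \<tau>')"
proof -
  have "(\<Prod>i\<in>\<sigma>. var i) = (\<Prod>i\<in>\<sigma> - \<sigma>'. var i) * (\<Prod>i\<in>\<sigma>'. var i)"
    using assms by (simp add: prod.subset_diff)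
  moreover have "(\<Prod>j\<in>\<tau>. 1 - var j) = (\<Prod>j\<in>\<tau> - \<tau>'. 1 - var j) * (\<Prod>j\<in>\<tau>'. 1 - var j)"
    using assms by (simp add: prod.subset_diff)
  ultimately show ?thesis by (simp add: pm_def ac_simps)
qed

theorem proposition1p4:
  fixes n :: nat and C :: "nat set set"
  assumes "is_code n C"
    and "ind_pierced n C"
  shows "\<forall>f\<in>canonical_form n C. tdeg f = 2"
proof
  fix f assume fC: "f \<in> canonical_form n C"
  then obtain \<sigma> \<tau> where st: "\<sigma> \<subseteq> {1..n}" "\<tau> \<subseteq> {1..n}" "\<sigma> \<inter> \<tau> = {}" "f = pm \<sigma> \<tau>"
    unfolding canonical_form_def is_pseudo_monomial_def by blast
  have fs: "finite \<sigma>" "finite \<tau>" using st by (meson finite_atLeastAtMost finite_subset)+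
  have fJ: "f \<in> neural_ideal n C" and fmin: "\<And>g. is_pseudo_monomial n g \<Longrightarrow> g \<in> neural_ideal n C \<Longrightarrow> pdvd n g f \<Longrightarrow> g = f"
    using fC unfolding canonical_form_def by auto
  have Csub: "\<forall>c\<in>C. c \<subseteq> {1..n}" and e: "{} \<in> C" and fire: "\<forall>i\<in>{1..n}. \<exists>c\<in>C. i \<in> c"
    using assms(1) unfolding is_code_def by auto
  have ebf: "eb C \<sigma> \<tau>"
    unfolding eb_def
  proof (intro ballI notI)
    fix c assume "c \<in> C" "\<sigma> \<subseteq> c \<and> c \<inter> \<tau> = {}"
    hence "ev c f = 1" using st fs by (simp add: ev_pm Int_commute)
    moreover have "ev c f = 0" using ideal_ev[OF fJ \<open>c \<in> C\<close> Csub] .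
    ultimately show False by simp
  qed
  have minim: "\<forall>\<sigma>'\<subseteq>\<sigma>. \<forall>\<tau>'\<subseteq>\<tau>. eb C \<sigma>' \<tau>' \<longrightarrow> \<sigma>' = \<sigma> \<and> \<tau>' = \<tau>"
  proof (intro allI impI)
    fix \<sigma>' \<tau>' assume s': "\<sigma>' \<subseteq> \<sigma>" "\<tau>' \<subseteq> \<tau>" "eb C \<sigma>' \<tau>'"
    have s'n: "\<sigma>' \<subseteq> {1..n}" "\<tau>' \<subseteq> {1..n}" "\<sigma>' \<inter> \<tau>' = {}" using s' st by auto
    have fs': "finite \<sigma>'" "finite \<tau>'" using s' fs finite_subset by auto
    have "pm \<sigma>' \<tau>' = f"
    proof (rule fmin)
      show "is_pseudo_monomial n (pm \<sigma>' \<tau>')" unfolding is_pseudo_monomial_def using s'n by blast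
      show "pm \<sigma>' \<tau>' \<in> neural_ideal n C" using in_ideal s'n s'(3) unfolding eb_def by blast
      show "pdvd n (pm \<sigma>' \<tau>') f" unfolding pdvd_def
        using pm_split[OF s'(1,2) fs] poly_in_pm[of "\<sigma> - \<sigma>'" n "\<tau> - \<tau>'"] st by blast
    qed
    show "\<sigma>' = \<sigma> \<and> \<tau>' = \<tau>"
    proof (rule ccontr)
      assume ne: "\<not> (\<sigma>' = \<sigma> \<and> \<tau>' = \<tau>)"
      obtain c where "ev c (pm \<sigma>' \<tau>') \<noteq> ev c f"
      proof (cases "\<sigma>' = \<sigma>")
        case False
        then obtain a where "a \<in> \<sigma>" "a \<notin> \<sigma>'" using s' by blast
        hence "ev \<sigma>' (pm \<sigma>' \<tau>') \<noteq> ev \<sigma>' f" using st fs fs' s'n by (auto simp: ev_pm)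
        thus ?thesis using that by blast
      next
        case True
        then obtain b where b: "b \<in> \<tau>" "b \<notin> \<tau>'" using s' ne by blast
        hence "ev (insert b \<sigma>) (pm \<sigma>' \<tau>') \<noteq> ev (insert b \<sigma>) f" using st fs fs' s' True by (auto simp: ev_pm)
        thus ?thesis using that by blast
      qed
      thus False using \<open>pm \<sigma>' \<tau>' = f\<close> by simp
    qed
  qed
  obtain k where "k_ind_pierced n k C" using assms(2) unfolding ind_pierced_def by blast
  from comb[OF this st(3) fs ebf minim] have le: "card \<sigma> + card \<tau> \<le> 2" .
  have ge: "card \<sigma> + card \<tau> \<ge> 2"
  proof (rule ccontr)
    assume "\<not> ?thesis"
    hence "card \<sigma> + card \<tau> \<le> 1" by simp
    moreover have "\<sigma> \<noteq> {}" using ebf e by (auto simp: eb_def)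
    moreover have "card \<sigma> \<ge> 1" using calculation(2) fs(1) by (simp add: Suc_le_eq card_gt_0_iff)
    ultimately have "card \<sigma> = 1" "card \<tau> = 0" by linarith+
    then obtain i where "\<sigma> = {i}" "\<tau> = {}" using fs by (metis card_1_singletonE card_0_eq)
    thus False using ebf fire st by (auto simp: eb_def)
  qed
  show "tdeg f = 2" using tdeg_pm[OF fs(2) fs(1) st(3)] le ge st(4) by simp
qed

end
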